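(* Let $\theta\in\mathbb{K}\setminus\{0\}$ and let $(A,P)$ be a complete filtered Rota--Baxter algebra of weight $\theta$ over a field $\mathbb{K}$ of characteristic zero; put $\tilde P:=\theta\,\mathrm{id}_A-P$. Let $\chi_\theta:A_1\to A_1$ be the map defined by $$\chi_\theta(a)=a-\frac1\theta\,\mathrm{BCH}\Big(P\big(\chi_\theta(a)\big),\tilde P\big(\chi_\theta(a)\big)\Big),\qquad a\in A_1.$$ Then for all $a\in A_1$: (1) $\chi_\theta(a)=a+\frac1\theta\,\mathrm{BCH}\big(-P(\chi_\theta(a)),\theta a\big)$; (2) $\exp(\theta a)=\exp\big(P(\chi_\theta(a))\big)\exp\big(\tilde P(\chi_\theta(a))\big)$; (3) with $b\in A$ defined by $1+\theta b:=\exp(\theta a)$, the elements $x:=\exp\big(P(\chi_\theta(a))\big)^{-1}$ and $x':=\exp\big(\tilde P(\chi_\theta(a))\big)^{-1}$ are the unique solutions of the equations $x=1-P(x\,b)$ and $x'=1-\tilde P(b\,x')$ respectively.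
   Context: A Rota--Baxter algebra of weight $\theta$ is an associative $\mathbb{K}$-algebra $A$ with a linear map $P:A\to A$ satisfying $P(x)P(y)+\theta P(xy)=P(xP(y))+P(P(x)y)$ for all $x,y\in A$. A Rota--Baxter ideal is an ideal $I$ with $P(I)\subseteq I$. A complete filtered Rota--Baxter algebra is a Rota--Baxter algebra $(A,P)$ with a decreasing filtration $A=A_0\supseteq A_1\supseteq\cdots$ by Rota--Baxter ideals such that $A_mA_n\subseteq A_{m+n}$ and $A\cong\varprojlim A/A_n$. $\exp$ and $\log$ are the usual series, mutually inverse bijections between $A_1$ and $1+A_1$. $\mathrm{BCH}(x,y)$ is the Baker--Campbell--Hausdorff series, $\exp(x)\exp(y)=\exp(x+y+\mathrm{BCH}(x,y))$. The map $\chi_\theta$ is the unique map $A_1\to A_1$ satisfying the displayed fixed-point equation (obtained as the limit, in the filtration topology, of the iteration starting from $a$). *)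

theory Defs
  imports Main
begin

text \<open>An associative unital K-algebra is modelled as a type 'a of class ring_1
  together with a scalar multiplication smul by a field 'k of characteristic zero.\<close>

definition is_algebra :: "('k::field_char_0 \<Rightarrow> 'a::ring_1 \<Rightarrow> 'a) \<Rightarrow> bool" where
  "is_algebra smul \<longleftrightarrow>
     (\<forall>c d x. smul (c + d) x = smul c x + smul d x) \<and>
     (\<forall>c x y. smul c (x + y) = smul c x + smul c y) \<and>
     (\<forall>c d x. smul (c * d) x = smul c (smul d x)) \<and>
     (\<forall>x. smul 1 x = x) \<and>
     (\<forall>c x y. smul c (x * y) = smul c x * y) \<and>
     (\<forall>c x y. smul c (x * y) = x * smul c y)"

definition is_rota_baxter :: "('k::field_char_0 \<Rightarrow> 'a::ring_1 \<Rightarrow> 'a) \<Rightarrow> ('a \<Rightarrow> 'a) \<Rightarrow> 'k \<Rightarrow> bool" where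
  "is_rota_baxter smul P \<theta> \<longleftrightarrow>
     (\<forall>x y. P (x + y) = P x + P y) \<and>
     (\<forall>c x. P (smul c x) = smul c (P x)) \<and>
     (\<forall>x y. P x * P y + smul \<theta> (P (x * y)) = P (x * P y) + P (P x * y))"

definition is_rb_ideal :: "('k::field_char_0 \<Rightarrow> 'a::ring_1 \<Rightarrow> 'a) \<Rightarrow> ('a \<Rightarrow> 'a) \<Rightarrow> 'a set \<Rightarrow> bool" where
  "is_rb_ideal smul P I \<longleftrightarrow>
     0 \<in> I \<and> (\<forall>x\<in>I. \<forall>y\<in>I. x + y \<in> I) \<and> (\<forall>x\<in>I. - x \<in> I) \<and>
     (\<forall>c. \<forall>x\<in>I. smul c x \<in> I) \<and>
     (\<forall>x\<in>I. \<forall>y. x * y \<in> I \<and> y * x \<in> I) \<and>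
     (\<forall>x\<in>I. P x \<in> I)"

text \<open>Completeness
  (the canonical map A \<rightarrow> lim A/A_n is bijective) is unfolded as:
  injectivity (the filtration is separated) and surjectivity (every compatible
  system of residues, represented by a sequence x with x(n+1) - x n \<in> A_n,
  has a preimage).\<close>
definition complete_filtered_rb ::
  "('k::field_char_0 \<Rightarrow> 'a::ring_1 \<Rightarrow> 'a) \<Rightarrow> ('a \<Rightarrow> 'a) \<Rightarrow> 'k \<Rightarrow> (nat \<Rightarrow> 'a set) \<Rightarrow> bool" where
  "complete_filtered_rb smul P \<theta> F \<longleftrightarrow>
     is_algebra smul \<and> is_rota_baxter smul P \<theta> \<and>
     F 0 = UNIV \<and> (\<forall>n. F (Suc n) \<subseteq> F n) \<and>
     (\<forall>n. is_rb_ideal smul P (F n)) \<and>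
     (\<forall>m n. \<forall>x\<in>F m. \<forall>y\<in>F n. x * y \<in> F (m + n)) \<and>
     (\<Inter>n. F n) = {0} \<and>
     (\<forall>x::nat \<Rightarrow> 'a. (\<forall>n. x (Suc n) - x n \<in> F n) \<longrightarrow> (\<exists>y. \<forall>n. y - x n \<in> F n))"

definition flim :: "(nat \<Rightarrow> 'a set) \<Rightarrow> (nat \<Rightarrow> 'a::ring_1) \<Rightarrow> 'a \<Rightarrow> bool" where
  "flim F s y \<longleftrightarrow> (\<forall>n. \<exists>N. \<forall>m\<ge>N. s m - y \<in> F n)"

definition flimit :: "(nat \<Rightarrow> 'a set) \<Rightarrow> (nat \<Rightarrow> 'a::ring_1) \<Rightarrow> 'a" where
  "flimit F s = (THE y. flim F s y)"

definition fsuminf :: "(nat \<Rightarrow> 'a set) \<Rightarrow> (nat \<Rightarrow> 'a::ring_1) \<Rightarrow> 'a" where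
  "fsuminf F f = flimit F (\<lambda>N. \<Sum>i<N. f i)"

definition fexp :: "('k::field_char_0 \<Rightarrow> 'a::ring_1 \<Rightarrow> 'a) \<Rightarrow> (nat \<Rightarrow> 'a set) \<Rightarrow> 'a \<Rightarrow> 'a" where
  "fexp smul F x = fsuminf F (\<lambda>n. smul (inverse (fact n)) (x ^ n))"

definition flog :: "('k::field_char_0 \<Rightarrow> 'a::ring_1 \<Rightarrow> 'a) \<Rightarrow> (nat \<Rightarrow> 'a set) \<Rightarrow> 'a \<Rightarrow> 'a" where
  "flog smul F u = fsuminf F (\<lambda>n. if n = 0 then 0
      else smul ((-1) ^ (n + 1) / of_nat n) ((u - 1) ^ n))"

definition BCH :: "('k::field_char_0 \<Rightarrow> 'a::ring_1 \<Rightarrow> 'a) \<Rightarrow> (nat \<Rightarrow> 'a set) \<Rightarrow> 'a \<Rightarrow> 'a \<Rightarrow> 'a" where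
  "BCH smul F x y = flog smul F (fexp smul F x * fexp smul F y) - x - y"

definition rinv :: "'a::ring_1 \<Rightarrow> 'a" where
  "rinv e = (THE x. x * e = 1 \<and> e * x = 1)"

definition Ptilde :: "('k::field_char_0 \<Rightarrow> 'a::ring_1 \<Rightarrow> 'a) \<Rightarrow> ('a \<Rightarrow> 'a) \<Rightarrow> 'k \<Rightarrow> 'a \<Rightarrow> 'a" where
  "Ptilde smul P \<theta> x = smul \<theta> x - P x"

fun chi_iter :: "('k::field_char_0 \<Rightarrow> 'a::ring_1 \<Rightarrow> 'a) \<Rightarrow> ('a \<Rightarrow> 'a) \<Rightarrow> 'k \<Rightarrow> (nat \<Rightarrow> 'a set) \<Rightarrow> 'a \<Rightarrow> nat \<Rightarrow> 'a" where
  "chi_iter smul P \<theta> F a 0 = a"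
| "chi_iter smul P \<theta> F a (Suc k) =
     a - smul (inverse \<theta>) (BCH smul F (P (chi_iter smul P \<theta> F a k))
                                       (Ptilde smul P \<theta> (chi_iter smul P \<theta> F a k)))"

definition chi :: "('k::field_char_0 \<Rightarrow> 'a::ring_1 \<Rightarrow> 'a) \<Rightarrow> ('a \<Rightarrow> 'a) \<Rightarrow> 'k \<Rightarrow> (nat \<Rightarrow> 'a set) \<Rightarrow> 'a \<Rightarrow> 'a" where
  "chi smul P \<theta> F a = flimit F (chi_iter smul P \<theta> F a)"

end

theory Submission
  imports Defs "HOL-Computational_Algebra.Formal_Power_Series"
begin

unbundle fps_syntax



locale cfrb =
  fixes smul :: "'k::field_char_0 \<Rightarrow> 'a::ring_1 \<Rightarrow> 'a"
    and P :: "'a \<Rightarrow> 'a" and \<theta> :: 'k and F :: "nat \<Rightarrow> 'a set"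
  assumes cf: "complete_filtered_rb smul P \<theta> F"
begin

lemma alg: "is_algebra smul" using cf by (simp add: complete_filtered_rb_def)
lemma rb: "is_rota_baxter smul P \<theta>" using cf by (simp add: complete_filtered_rb_def)

lemma smul_add_left: "smul (c + d) x = smul c x + smul d x"
  using alg by (simp add: is_algebra_def)
lemma smul_add_right: "smul c (x + y) = smul c x + smul c y"
  using alg by (simp add: is_algebra_def)
lemma smul_smul: "smul c (smul d x) = smul (c * d) x"
  using alg by (simp add: is_algebra_def)
lemma smul_one [simp]: "smul 1 x = x"
  using alg by (simp add: is_algebra_def)
lemma smul_mult_left: "smul c x * y = smul c (x * y)"
  using alg by (simp add: is_algebra_def)
lemma smul_mult_right: "x * smul c y = smul c (x * y)"
  using alg by (metis is_algebra_def)

lemma smul_zero_left [simp]: "smul 0 x = 0"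
  using smul_add_left[of 0 0 x] by simp
lemma smul_zero_right [simp]: "smul c 0 = 0"
  using smul_add_right[of c 0 0] by simp
lemma smul_minus_right: "smul c (- x) = - smul c x"
  using smul_add_right[of c x "-x"] by (simp add: eq_neg_iff_add_eq_0 add.commute)
lemma smul_minus_left: "smul (- c) x = - smul c x"
  using smul_add_left[of c "-c" x] by (simp add: eq_neg_iff_add_eq_0 add.commute)
lemma smul_diff_right: "smul c (x - y) = smul c x - smul c y"
  using smul_add_right[of c x "-y"] smul_minus_right by simp
lemma smul_diff_left: "smul (c - d) x = smul c x - smul d x"
  using smul_add_left[of c "-d" x] smul_minus_left by simp
lemma smul_sum: "smul c (sum f A) = (\<Sum>i\<in>A. smul c (f i))"
  by (induction A rule: infinite_finite_induct) (auto simp: smul_add_right)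
lemma smul_inv_cancel: "c \<noteq> 0 \<Longrightarrow> smul (inverse c) (smul c x) = x"
  by (simp add: smul_smul)
lemma smul_cancel2: "c \<noteq> 0 \<Longrightarrow> smul c (smul (inverse c) x) = x"
  by (simp add: smul_smul)

lemma P_add: "P (x + y) = P x + P y"
  using rb by (simp add: is_rota_baxter_def)
lemma P_smul: "P (smul c x) = smul c (P x)"
  using rb by (simp add: is_rota_baxter_def)
lemma P_rb: "P x * P y + smul \<theta> (P (x * y)) = P (x * P y) + P (P x * y)"
  using rb by (simp add: is_rota_baxter_def)
lemma P_zero [simp]: "P 0 = 0"
  using P_add[of 0 0] by simp
lemma P_minus: "P (- x) = - P x"
  using P_add[of x "-x"] by (simp add: eq_neg_iff_add_eq_0 add.commute)
lemma P_diff: "P (x - y) = P x - P y"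
  using P_add[of x "-y"] P_minus by simp
lemma P_sum: "P (sum f A) = (\<Sum>i\<in>A. P (f i))"
  by (induction A rule: infinite_finite_induct) (auto simp: P_add)

definition Q :: "'a \<Rightarrow> 'a" where "Q x = Ptilde smul P \<theta> x"
lemma Q_def': "Q x = smul \<theta> x - P x" by (simp add: Q_def Ptilde_def)
lemma Q_add: "Q (x + y) = Q x + Q y"
  by (simp add: Q_def' smul_add_right P_add)
lemma Q_smul: "Q (smul c x) = smul c (Q x)"
  by (simp add: Q_def' smul_diff_right P_smul smul_smul mult.commute)
lemma Q_zero [simp]: "Q 0 = 0" by (simp add: Q_def')
lemma Q_minus: "Q (- x) = - Q x"
  by (simp add: Q_def' smul_minus_right P_minus)
lemma Q_diff: "Q (x - y) = Q x - Q y"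
  by (simp add: Q_def' smul_diff_right P_diff)
lemma Q_sum: "Q (sum f A) = (\<Sum>i\<in>A. Q (f i))"
  by (induction A rule: infinite_finite_induct) (auto simp: Q_add)

lemma F0: "F 0 = UNIV" using cf by (simp add: complete_filtered_rb_def)
lemma F_ideal: "is_rb_ideal smul P (F n)" using cf by (simp add: complete_filtered_rb_def)
lemma F_zero [simp]: "0 \<in> F n" using F_ideal[of n] by (simp add: is_rb_ideal_def)
lemma F_add: "x \<in> F n \<Longrightarrow> y \<in> F n \<Longrightarrow> x + y \<in> F n"
  using F_ideal[of n] by (simp add: is_rb_ideal_def)
lemma F_minus: "x \<in> F n \<Longrightarrow> - x \<in> F n"
  using F_ideal[of n] by (simp add: is_rb_ideal_def)
lemma F_minus_iff: "- x \<in> F n \<longleftrightarrow> x \<in> F n"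
  using F_minus[of "-x" n] F_minus[of x n] by auto
lemma F_diff: "x \<in> F n \<Longrightarrow> y \<in> F n \<Longrightarrow> x - y \<in> F n"
  using F_add[of x n "-y"] F_minus by simp
lemma F_diff_sym: "x - y \<in> F n \<Longrightarrow> y - x \<in> F n"
  using F_minus[of "x - y" n] by simp
lemma F_smul: "x \<in> F n \<Longrightarrow> smul c x \<in> F n"
  using F_ideal[of n] by (simp add: is_rb_ideal_def)
lemma F_multL: "x \<in> F n \<Longrightarrow> y * x \<in> F n"
  using F_ideal[of n] by (simp add: is_rb_ideal_def)
lemma F_multR: "x \<in> F n \<Longrightarrow> x * y \<in> F n"
  using F_ideal[of n] by (simp add: is_rb_ideal_def)
lemma F_P: "x \<in> F n \<Longrightarrow> P x \<in> F n"
  using F_ideal[of n] by (simp add: is_rb_ideal_def)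
lemma F_Q: "x \<in> F n \<Longrightarrow> Q x \<in> F n"
  by (simp add: Q_def' F_diff F_smul F_P)
lemma F_sum: "(\<And>i. i \<in> A \<Longrightarrow> f i \<in> F n) \<Longrightarrow> sum f A \<in> F n"
  by (induction A rule: infinite_finite_induct) (auto simp: F_add)
lemma F_Suc: "F (Suc n) \<subseteq> F n" using cf by (simp add: complete_filtered_rb_def)
lemma F_mono: "m \<le> n \<Longrightarrow> F n \<subseteq> F m"
  by (induction n rule: dec_induct) (use F_Suc in auto)
lemma F_monoD: "x \<in> F n \<Longrightarrow> m \<le> n \<Longrightarrow> x \<in> F m"
  using F_mono by auto
lemma F_mult: "x \<in> F m \<Longrightarrow> y \<in> F n \<Longrightarrow> x * y \<in> F (m + n)"
  using cf by (simp add: complete_filtered_rb_def)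
lemma F_power: "x \<in> F 1 \<Longrightarrow> x ^ n \<in> F n"
proof (induction n)
  case 0 then show ?case by (simp add: F0)
next
  case (Suc n) then show ?case using F_mult[of x 1 "x^n" n] by simp
qed
lemma F_sep: "(\<And>n. x \<in> F n) \<Longrightarrow> x = 0"
proof -
  assume "\<And>n. x \<in> F n"
  then have "x \<in> (\<Inter>n. F n)" by auto
  moreover have "(\<Inter>n. F n) = {0}" using cf by (simp add: complete_filtered_rb_def)
  ultimately show "x = 0" by auto
qed
lemma F_complete: "(\<And>n. x (Suc n) - x n \<in> F n) \<Longrightarrow> \<exists>y. \<forall>n. y - x n \<in> F n"
  using cf unfolding complete_filtered_rb_def by blast

lemma pow_diff_F:
  assumes "x \<in> F 1" "y \<in> F 1" "x - y \<in> F k"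
  shows "x ^ Suc n - y ^ Suc n \<in> F (k + n)"
proof (induction n)
  case 0 then show ?case using assms by simp
next
  case (Suc n)
  have eq: "x ^ Suc (Suc n) - y ^ Suc (Suc n) = x * (x ^ Suc n - y ^ Suc n) + (x - y) * y ^ Suc n"
    by (simp add: algebra_simps)
  have "x * (x ^ Suc n - y ^ Suc n) \<in> F (1 + (k + n))" using F_mult assms Suc by blast
  moreover have "(x - y) * y ^ Suc n \<in> F (k + Suc n)" using F_mult assms F_power by blast
  ultimately show ?case unfolding eq by (intro F_add) (auto simp: add.commute)
qed

end




context cfrb
begin

definition fs :: "(nat \<Rightarrow> 'a) \<Rightarrow> 'a \<Rightarrow> bool" where
  "fs f y \<longleftrightarrow> (\<forall>N. y - (\<Sum>i<N. f i) \<in> F N)"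

lemma fs_unique: "fs f y \<Longrightarrow> fs f z \<Longrightarrow> y = z"
proof -
  assume a: "fs f y" "fs f z"
  have "y - z \<in> F N" for N
  proof -
    have "y - z = (y - (\<Sum>i<N. f i)) - (z - (\<Sum>i<N. f i))" by simp
    then show ?thesis using a by (metis F_diff fs_def)
  qed
  then show "y = z" using F_sep[of "y - z"] by simp
qed

lemma flim_unique: "flim F s y \<Longrightarrow> flim F s z \<Longrightarrow> y = z"
proof -
  assume a: "flim F s y" "flim F s z"
  have "y - z \<in> F n" for n
  proof -
    obtain N1 where N1: "\<forall>m\<ge>N1. s m - y \<in> F n" using a(1) by (auto simp: flim_def)
    obtain N2 where N2: "\<forall>m\<ge>N2. s m - z \<in> F n" using a(2) by (auto simp: flim_def)
    have "s (max N1 N2) - z \<in> F n" "s (max N1 N2) - y \<in> F n" using N1 N2 by auto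
    then have "s (max N1 N2) - z - (s (max N1 N2) - y) \<in> F n" by (rule F_diff)
    then show ?thesis by simp
  qed
  then show "y = z" using F_sep[of "y - z"] by simp
qed

lemma flimitI: "flim F s y \<Longrightarrow> flimit F s = y"
  unfolding flimit_def using flim_unique by blast

lemma fs_exists: "(\<And>n. f n \<in> F n) \<Longrightarrow> fs f (fsuminf F f)"
proof -
  assume fn: "\<And>n. f n \<in> F n"
  define S where "S N = (\<Sum>i<N. f i)" for N
  have "S (Suc n) - S n \<in> F n" for n using fn by (simp add: S_def)
  then obtain y where y: "\<forall>n. y - S n \<in> F n" using F_complete by blast
  have "flim F S y" unfolding flim_def
  proof
    fix n show "\<exists>N. \<forall>m\<ge>N. S m - y \<in> F n"
      using y F_monoD F_diff_sym by blast
  qed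
  then have "fsuminf F f = y" by (simp add: fsuminf_def flimitI S_def[abs_def])
  then show ?thesis using y by (simp add: fs_def S_def)
qed

lemma fs_eq: "(\<And>n. f n \<in> F n) \<Longrightarrow> fs f y \<Longrightarrow> fsuminf F f = y"
  using fs_exists fs_unique by blast

lemma fs_add: "fs f y \<Longrightarrow> fs g z \<Longrightarrow> fs (\<lambda>n. f n + g n) (y + z)"
  unfolding fs_def
proof
  fix N assume a: "\<forall>N. y - sum f {..<N} \<in> F N" "\<forall>N. z - sum g {..<N} \<in> F N"
  have "y + z - (\<Sum>n<N. f n + g n) = (y - sum f {..<N}) + (z - sum g {..<N})"
    by (simp add: sum.distrib algebra_simps)
  then show "y + z - (\<Sum>n<N. f n + g n) \<in> F N" using a F_add by metis
qed

lemma fs_P: "fs f y \<Longrightarrow> fs (\<lambda>n. P (f n)) (P y)"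
  unfolding fs_def using F_P by (metis P_diff P_sum)
lemma fs_Q: "fs f y \<Longrightarrow> fs (\<lambda>n. Q (f n)) (Q y)"
  unfolding fs_def using F_Q by (metis Q_diff Q_sum)
lemma fs_smul: "fs f y \<Longrightarrow> fs (\<lambda>n. smul c (f n)) (smul c y)"
  unfolding fs_def using F_smul by (metis smul_diff_right smul_sum)
lemma fs_multL: "fs f y \<Longrightarrow> fs (\<lambda>n. z * f n) (z * y)"
  unfolding fs_def using F_multL by (metis right_diff_distrib sum_distrib_left)

lemma fs_congF: "fs f y \<Longrightarrow> fs g z \<Longrightarrow> (\<And>n. n < N \<Longrightarrow> f n = g n) \<Longrightarrow> y - z \<in> F N"
proof -
  assume a: "fs f y" "fs g z" "\<And>n. n < N \<Longrightarrow> f n = g n"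
  have s: "sum f {..<N} = sum g {..<N}" using a(3) by (intro sum.cong) auto
  have "y - z = (y - sum f {..<N}) - (z - sum g {..<N})" using s by simp
  then show ?thesis using a(1,2) F_diff unfolding fs_def by metis
qed

lemma smul_sum_left: "smul (sum f A) x = (\<Sum>i\<in>A. smul (f i) x)"
  by (induction A rule: infinite_finite_induct) (auto simp: smul_add_left)

definition ev :: "'a \<Rightarrow> 'k fps \<Rightarrow> 'a" where
  "ev x f = fsuminf F (\<lambda>n. smul (f $ n) (x ^ n))"

lemma ev_fs: "x \<in> F 1 \<Longrightarrow> fs (\<lambda>n. smul (f $ n) (x ^ n)) (ev x f)"
  unfolding ev_def by (rule fs_exists) (simp add: F_smul F_power)

lemma ev_eqI: "x \<in> F 1 \<Longrightarrow> fs (\<lambda>n. smul (f $ n) (x ^ n)) y \<Longrightarrow> ev x f = y"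
  using ev_fs fs_unique by blast

lemma ev_congr: "x \<in> F 1 \<Longrightarrow> (\<And>n. n < N \<Longrightarrow> f $ n = g $ n) \<Longrightarrow> ev x f - ev x g \<in> F N"
  by (rule fs_congF[OF ev_fs ev_fs]) auto

lemma ev_add: "x \<in> F 1 \<Longrightarrow> ev x (f + g) = ev x f + ev x g"
  by (rule ev_eqI) (use fs_add[OF ev_fs ev_fs] in \<open>simp_all add: smul_add_left\<close>)

lemma ev_smul: "x \<in> F 1 \<Longrightarrow> ev x (fps_const c * f) = smul c (ev x f)"
  by (rule ev_eqI) (use fs_smul[OF ev_fs] in \<open>simp_all add: smul_smul\<close>)

lemma ev_minus: "x \<in> F 1 \<Longrightarrow> ev x (- f) = - ev x f"
  using ev_smul[of x "-1" f] by (simp add: smul_minus_left fps_const_neg[symmetric])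

lemma ev_diff: "x \<in> F 1 \<Longrightarrow> ev x (f - g) = ev x f - ev x g"
  using ev_add[of x f "-g"] ev_minus by simp

lemma ev_sum: "x \<in> F 1 \<Longrightarrow> ev x (sum f A) = (\<Sum>i\<in>A. ev x (f i))"
proof (induction A rule: infinite_finite_induct)
  case (infinite A)
  have "fs (\<lambda>n. smul (0 $ n) (x ^ n)) 0" by (simp add: fs_def)
  then show ?case using infinite ev_eqI by simp
next
  case empty
  have "fs (\<lambda>n. smul (0 $ n) (x ^ n)) 0" by (simp add: fs_def)
  then show ?case using empty ev_eqI by simp
next
  case (insert a A) then show ?case by (simp add: ev_add)
qed

lemma ev_const: "x \<in> F 1 \<Longrightarrow> ev x (fps_const c) = smul c 1"
proof (rule ev_eqI)
  assume "x \<in> F 1"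
  show "fs (\<lambda>n. smul (fps_const c $ n) (x ^ n)) (smul c 1)"
    unfolding fs_def
  proof
    fix N show "smul c 1 - (\<Sum>n<N. smul (fps_const c $ n) (x ^ n)) \<in> F N"
    proof (cases N)
      case 0 then show ?thesis by (simp add: F0)
    next
      case (Suc M)
      have "(\<Sum>n<N. smul (fps_const c $ n) (x ^ n)) = (\<Sum>n\<in>{0}. smul (fps_const c $ n) (x ^ n))"
        by (rule sum.mono_neutral_right) (auto simp: Suc)
      then show ?thesis by simp
    qed
  qed
qed

lemma ev_one: "x \<in> F 1 \<Longrightarrow> ev x 1 = 1"
  using ev_const[of x 1] by simp

lemma ev_X: "x \<in> F 1 \<Longrightarrow> ev x fps_X = x"
proof (rule ev_eqI)
  assume x: "x \<in> F 1"
  show "fs (\<lambda>n. smul (fps_X $ n) (x ^ n)) x"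
    unfolding fs_def
  proof
    fix N show "x - (\<Sum>n<N. smul (fps_X $ n) (x ^ n)) \<in> F N"
    proof (cases "N \<le> 1")
      case True
      then have "N = 0 \<or> N = 1" by auto
      then show ?thesis using x by (auto simp: F0)
    next
      case False
      have "(\<Sum>n<N. smul (fps_X $ n) (x ^ n)) = (\<Sum>n\<in>{1}. smul (fps_X $ n) (x ^ n))"
        by (rule sum.mono_neutral_right) (use False in \<open>auto simp: fps_X_nth\<close>)
      then show ?thesis by (simp add: fps_X_nth)
    qed
  qed
qed

lemma ev_0F: "x \<in> F 1 \<Longrightarrow> ev x f - smul (f $ 0) 1 \<in> F 1"
  using ev_fs[of x f] unfolding fs_def by (metis (no_types, lifting) One_nat_def lessThan_0 lessThan_Suc
     power_0 sum.empty sum.insert finite.emptyI empty_iff add.right_neutral)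

lemma ev_F1: "x \<in> F 1 \<Longrightarrow> f $ 0 = 0 \<Longrightarrow> ev x f \<in> F 1"
  using ev_0F[of x f] by simp

lemma ev_mult:
  assumes x: "x \<in> F 1"
  shows "ev x (f * g) = ev x f * ev x g"
proof -
  have "ev x f * ev x g - ev x (f * g) \<in> F N" for N
  proof -
    define tf where "tf i = smul (f $ i) (x ^ i)" for i
    define tg where "tg i = smul (g $ i) (x ^ i)" for i
    define h where "h i j = smul (f $ i * g $ j) (x ^ (i + j))" for i j
    define Sf where "Sf = (\<Sum>i<N. tf i)"
    define Sg where "Sg = (\<Sum>i<N. tg i)"
    define Sfg where "Sfg = (\<Sum>n<N. smul ((f * g) $ n) (x ^ n))"
    have h1: "ev x f - Sf \<in> F N" using ev_fs[OF x, of f] by (simp add: fs_def Sf_def tf_def)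
    have h2: "ev x g - Sg \<in> F N" using ev_fs[OF x, of g] by (simp add: fs_def Sg_def tg_def)
    have h3: "ev x (f * g) - Sfg \<in> F N" using ev_fs[OF x, of "f * g"] by (simp add: fs_def Sfg_def)
    have tt: "tf i * tg j = h i j" for i j
      by (simp add: tf_def tg_def h_def smul_mult_left smul_mult_right smul_smul power_add mult.commute)
    define A where "A = {..<N} \<times> {..<N}"
    define T where "T = {(i, j). i + j < (N::nat)}"
    have "Sf * Sg = (\<Sum>i<N. \<Sum>j<N. tf i * tg j)" by (simp add: Sf_def Sg_def sum_product)
    also have "\<dots> = (\<Sum>(i,j)\<in>A. h i j)" by (simp add: tt A_def sum.cartesian_product)
    finally have e1: "Sf * Sg = (\<Sum>(i,j)\<in>A. h i j)" .
    have "Sfg = (\<Sum>n<N. \<Sum>i\<le>n. h i (n - i))"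
      by (simp add: Sfg_def h_def fps_mult_nth atLeast0AtMost smul_sum_left)
    also have "\<dots> = (\<Sum>(i,j)\<in>T. h i j)" unfolding T_def by (rule sum.triangle_reindex[symmetric])
    finally have e2: "Sfg = (\<Sum>(i,j)\<in>T. h i j)" .
    have TA: "T \<subseteq> A" by (auto simp: T_def A_def)
    have finA: "finite A" by (simp add: A_def)
    have "(\<Sum>(i,j)\<in>A. h i j) - (\<Sum>(i,j)\<in>T. h i j) = (\<Sum>(i,j)\<in>A - T. h i j)"
      using sum.subset_diff[OF TA finA, of "\<lambda>(i,j). h i j"] by simp
    moreover have "(\<Sum>(i,j)\<in>A - T. h i j) \<in> F N"
    proof (rule F_sum)
      fix p assume "p \<in> A - T"
      then obtain i j where p: "p = (i, j)" "N \<le> i + j" by (cases p) (simp add: T_def not_less)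
      have "h i j \<in> F (i + j)" unfolding h_def by (intro F_smul F_power x)
      then show "(case p of (i, j) \<Rightarrow> h i j) \<in> F N" using p F_monoD by auto
    qed
    ultimately have key: "Sf * Sg - Sfg \<in> F N" using e1 e2 by simp
    have "ev x f * ev x g - ev x (f * g) =
       ((ev x f - Sf) * ev x g + Sf * (ev x g - Sg)) + (Sf * Sg - Sfg) - (ev x (f * g) - Sfg)"
      by (simp add: algebra_simps)
    then show ?thesis using h1 h2 h3 key by (metis F_add F_diff F_multL F_multR)
  qed
  then show ?thesis using F_sep[of "ev x f * ev x g - ev x (f * g)"] by simp
qed

lemma ev_power: "x \<in> F 1 \<Longrightarrow> ev x (f ^ n) = ev x f ^ n"
  by (induction n) (simp_all add: ev_one ev_mult)

lemma ev_compose: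
  assumes x: "x \<in> F 1" and g0: "g $ 0 = 0"
  shows "ev x (f oo g) = ev (ev x g) f"
proof -
  define y where "y = ev x g"
  have y: "y \<in> F 1" using ev_F1[OF x g0] by (simp add: y_def)
  have "ev y f - ev x (f oo g) \<in> F N" for N
  proof -
    define H where "H = (\<Sum>i<N. fps_const (f $ i) * g ^ i)"
    have eH: "ev x H = (\<Sum>i<N. smul (f $ i) (y ^ i))"
      by (simp add: H_def ev_sum[OF x] ev_smul[OF x] ev_power[OF x] y_def)
    have a1: "ev y f - ev x H \<in> F N" using ev_fs[OF y, of f] eH by (simp add: fs_def)
    have a2: "ev x H - ev x (f oo g) \<in> F N"
    proof (rule ev_congr[OF x])
      fix n assume n: "n < N"
      have "H $ n = (\<Sum>i<N. f $ i * (g ^ i) $ n)" by (simp add: H_def fps_sum_nth)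
      also have "\<dots> = (\<Sum>i\<in>{0..n}. f $ i * (g ^ i) $ n)"
        using n startsby_zero_power_prefix[OF g0] by (intro sum.mono_neutral_right) auto
      finally show "H $ n = (f oo g) $ n" by (simp add: fps_compose_nth)
    qed
    have "ev y f - ev x (f oo g) = (ev y f - ev x H) + (ev x H - ev x (f oo g))" by simp
    then show ?thesis using a1 a2 F_add by metis
  qed
  then show ?thesis using F_sep[of "ev y f - ev x (f oo g)"] by (simp add: y_def)
qed

end




context cfrb
begin

abbreviation E where "E x \<equiv> fexp smul F x"
abbreviation L where "L u \<equiv> flog smul F u"

lemma E_ev: "E x = ev x (fps_exp 1)"
  unfolding fexp_def ev_def by (simp add: divide_inverse)

lemma L_ev: "L u = ev (u - 1) (fps_ln 1)"
  unfolding flog_def ev_def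
proof (intro arg_cong[where f="fsuminf F"] ext)
  fix n
  show "(if n = 0 then 0 else smul ((- 1) ^ (n + 1) / of_nat n) ((u - 1) ^ n)) =
        smul (fps_ln 1 $ n) ((u - 1) ^ n)"
    by (cases n) (simp_all add: fps_ln_nth)
qed

lemma fps_ln_exp: "fps_ln (1::'k) oo (fps_exp 1 - 1) = fps_X"
  using fps_ln_fps_exp_inv[of "1::'k"] fps_inv_fps_exp_compose(1)[of "1::'k"] by simp
lemma fps_exp_ln: "(fps_exp (1::'k) - 1) oo fps_ln 1 = fps_X"
  using fps_ln_fps_exp_inv[of "1::'k"] fps_inv_fps_exp_compose(2)[of "1::'k"] by simp

lemma E1_ev: "x \<in> F 1 \<Longrightarrow> E x - 1 = ev x (fps_exp 1 - 1)"
  by (simp add: E_ev ev_diff ev_one)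

lemma E_F1: "x \<in> F 1 \<Longrightarrow> E x - 1 \<in> F 1"
  using E1_ev[of x] ev_F1[of x "fps_exp 1 - 1"] by simp

lemma L_F1: "u - 1 \<in> F 1 \<Longrightarrow> L u \<in> F 1"
  using L_ev[of u] ev_F1[of "u - 1" "fps_ln 1"] by simp

lemma LE: "x \<in> F 1 \<Longrightarrow> L (E x) = x"
proof -
  assume x: "x \<in> F 1"
  have "L (E x) = ev (ev x (fps_exp 1 - 1)) (fps_ln 1)" using L_ev[of "E x"] E1_ev[OF x] by simp
  also have "\<dots> = ev x (fps_ln 1 oo (fps_exp 1 - 1))" by (rule ev_compose[symmetric, OF x]) simp
  also have "\<dots> = x" by (simp add: fps_ln_exp ev_X[OF x])
  finally show ?thesis .
qed

lemma EL: "u - 1 \<in> F 1 \<Longrightarrow> E (L u) = u"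
proof -
  assume w: "u - 1 \<in> F 1"
  have l: "L u \<in> F 1" using L_F1 w by simp
  have "E (L u) - 1 = ev (ev (u - 1) (fps_ln 1)) (fps_exp 1 - 1)" using E1_ev[OF l] L_ev[of u] by simp
  also have "\<dots> = ev (u - 1) ((fps_exp 1 - 1) oo fps_ln 1)" by (rule ev_compose[symmetric, OF w]) simp
  also have "\<dots> = u - 1" by (simp add: fps_exp_ln ev_X[OF w])
  finally show ?thesis by simp
qed

lemma E_minus_ev: "x \<in> F 1 \<Longrightarrow> E (- x) = ev x (fps_exp (-1))"
proof -
  assume x: "x \<in> F 1"
  have "ev x (- fps_X) = - x" by (simp add: ev_minus[OF x] ev_X[OF x])
  then have "E (- x) = ev (ev x (- fps_X)) (fps_exp 1)" by (simp add: E_ev)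
  also have "\<dots> = ev x (fps_exp 1 oo (- fps_X))" by (rule ev_compose[symmetric, OF x]) simp
  also have "\<dots> = ev x (fps_exp (-1))" by simp
  finally show ?thesis .
qed

lemma E_inv: "x \<in> F 1 \<Longrightarrow> E x * E (- x) = 1"
proof -
  assume x: "x \<in> F 1"
  have "E x * E (- x) = ev x (fps_exp 1 * fps_exp (-1))" by (simp only: E_ev[of x] E_minus_ev[OF x] ev_mult[OF x])
  also have "fps_exp 1 * fps_exp (-1) = (fps_exp (1 + -1) :: 'k fps)" by (simp only: fps_exp_add_mult)
  finally show ?thesis by (simp add: ev_one[OF x])
qed

lemma E_inv': "x \<in> F 1 \<Longrightarrow> E (- x) * E x = 1"
  using E_inv[of "- x"] F_minus by simp

lemma ev_est:
  assumes x: "x \<in> F 1" and y: "y \<in> F 1" and d: "x - y \<in> F k" and k: "1 \<le> k"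
  shows "ev x f - ev y f - smul (f $ 1) (x - y) \<in> F (Suc k)"
proof -
  define Sx where "Sx = (\<Sum>n<Suc k. smul (f $ n) (x ^ n))"
  define Sy where "Sy = (\<Sum>n<Suc k. smul (f $ n) (y ^ n))"
  have h1: "ev x f - Sx \<in> F (Suc k)" using ev_fs[OF x, of f] unfolding fs_def Sx_def by blast
  have h2: "ev y f - Sy \<in> F (Suc k)" using ev_fs[OF y, of f] unfolding fs_def Sy_def by blast
  define R where "R = (\<Sum>n\<in>{..<Suc k} - {1}. smul (f $ n) (x ^ n - y ^ n))"
  have "Sx - Sy = (\<Sum>n<Suc k. smul (f $ n) (x ^ n - y ^ n))"
    by (simp add: Sx_def Sy_def sum_subtractf smul_diff_right)
  also have "\<dots> = smul (f $ 1) (x ^ 1 - y ^ 1) + R"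
    unfolding R_def by (rule sum.remove) (use k in auto)
  finally have e: "Sx - Sy = smul (f $ 1) (x - y) + R" by simp
  have R: "R \<in> F (Suc k)" unfolding R_def
  proof (rule F_sum)
    fix n assume n: "n \<in> {..<Suc k} - {1}"
    show "smul (f $ n) (x ^ n - y ^ n) \<in> F (Suc k)"
    proof (cases n)
      case 0 then show ?thesis by simp
    next
      case (Suc m)
      with n have m: "1 \<le> m" by auto
      have "x ^ Suc m - y ^ Suc m \<in> F (k + m)" by (rule pow_diff_F[OF x y d])
      then have "x ^ Suc m - y ^ Suc m \<in> F (Suc k)" using m F_monoD by auto
      then show ?thesis using Suc F_smul by simp
    qed
  qed
  have "ev x f - ev y f - smul (f $ 1) (x - y) = (ev x f - Sx) - (ev y f - Sy) + R"
    using e by (simp add: algebra_simps)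
  then show ?thesis using h1 h2 R by (metis F_add F_diff)
qed

lemma E_est: "x \<in> F 1 \<Longrightarrow> y \<in> F 1 \<Longrightarrow> x - y \<in> F k \<Longrightarrow> 1 \<le> k \<Longrightarrow> E x - E y - (x - y) \<in> F (Suc k)"
  using ev_est[of x y k "fps_exp 1"] by (simp add: E_ev)

lemma L_est: "u - 1 \<in> F 1 \<Longrightarrow> v - 1 \<in> F 1 \<Longrightarrow> u - v \<in> F k \<Longrightarrow> 1 \<le> k \<Longrightarrow> L u - L v - (u - v) \<in> F (Suc k)"
  using ev_est[of "u - 1" "v - 1" k "fps_ln 1"] by (simp add: L_ev fps_ln_nth)

end



context cfrb
begin

definition T :: "'a \<Rightarrow> 'a \<Rightarrow> 'a" where
  "T a x = a - smul (inverse \<theta>) (BCH smul F (P x) (Ptilde smul P \<theta> x))"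

lemma BCH_eq: "BCH smul F x y = L (E x * E y) - x - y"
  by (simp add: BCH_def)

lemma EE_F1: "u \<in> F 1 \<Longrightarrow> v \<in> F 1 \<Longrightarrow> E u * E v - 1 \<in> F 1"
proof -
  assume u: "u \<in> F 1" and v: "v \<in> F 1"
  have "E u * E v - 1 = (E u - 1) * E v + (E v - 1)" by (simp add: algebra_simps)
  then show ?thesis using E_F1[OF u] E_F1[OF v] F_multR F_add by metis
qed

lemma T_F1: "a \<in> F 1 \<Longrightarrow> x \<in> F 1 \<Longrightarrow> T a x \<in> F 1"
proof -
  assume a: "a \<in> F 1" and x: "x \<in> F 1"
  have u: "P x \<in> F 1" and v: "Q x \<in> F 1" using x F_P F_Q by auto
  have "L (E (P x) * E (Q x)) \<in> F 1" using L_F1 EE_F1[OF u v] by blast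
  then have "BCH smul F (P x) (Q x) \<in> F 1" using u v by (simp add: BCH_eq F_diff)
  then show ?thesis using a by (simp add: T_def Q_def[symmetric] F_diff F_smul)
qed

lemma T_contr:
  assumes x: "x \<in> F 1" and y: "y \<in> F 1" and d: "x - y \<in> F k" and k: "1 \<le> k"
  shows "T a x - T a y \<in> F (Suc k)"
proof -
  define u1 where "u1 = P x"
  define v1 where "v1 = Q x"
  define u2 where "u2 = P y"
  define v2 where "v2 = Q y"
  have u1: "u1 \<in> F 1" and v1: "v1 \<in> F 1" and u2: "u2 \<in> F 1" and v2: "v2 \<in> F 1"
    using x y F_P F_Q by (auto simp: u1_def v1_def u2_def v2_def)
  have d1: "u1 - u2 \<in> F k" using F_P[OF d] by (simp add: u1_def u2_def P_diff)
  have d2: "v1 - v2 \<in> F k" using F_Q[OF d] by (simp add: v1_def v2_def Q_diff)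
  have e1: "E u1 - E u2 - (u1 - u2) \<in> F (Suc k)" by (rule E_est[OF u1 u2 d1 k])
  have e2: "E v1 - E v2 - (v1 - v2) \<in> F (Suc k)" by (rule E_est[OF v1 v2 d2 k])
  have sk: "F (Suc k) \<subseteq> F k" by (rule F_Suc)
  have f1: "E u1 - E u2 \<in> F k"
  proof -
    have "E u1 - E u2 = (E u1 - E u2 - (u1 - u2)) + (u1 - u2)" by simp
    then show ?thesis using e1 sk d1 F_add by (metis subsetD)
  qed
  have f2: "E v1 - E v2 \<in> F k"
  proof -
    have "E v1 - E v2 = (E v1 - E v2 - (v1 - v2)) + (v1 - v2)" by simp
    then show ?thesis using e2 sk d2 F_add by (metis subsetD)
  qed
  define U where "U = E u1 * E v1"
  define V where "V = E u2 * E v2"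
  have g1: "(E u1 - E u2) * (E v1 - 1) \<in> F (Suc k)"
    using F_mult[OF f1 E_F1[OF v1]] by simp
  have g2: "(E u2 - 1) * (E v1 - E v2) \<in> F (Suc k)"
    using F_mult[OF E_F1[OF u2] f2] by simp
  have eq1: "U - V - ((u1 - u2) + (v1 - v2)) = (E u1 - E u2 - (u1 - u2)) + (E u1 - E u2) * (E v1 - 1)
       + (E v1 - E v2 - (v1 - v2)) + (E u2 - 1) * (E v1 - E v2)"
    by (simp add: U_def V_def algebra_simps)
  have h1: "U - V - ((u1 - u2) + (v1 - v2)) \<in> F (Suc k)"
    unfolding eq1 using e1 e2 g1 g2 by (intro F_add)
  have UV: "U - V \<in> F k"
  proof -
    have "U - V = (U - V - ((u1 - u2) + (v1 - v2))) + (u1 - u2) + (v1 - v2)" by simp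
    then show ?thesis using h1 sk d1 d2 F_add by (metis subsetD)
  qed
  have h2: "L U - L V - (U - V) \<in> F (Suc k)"
    by (rule L_est) (use EE_F1[OF u1 v1] EE_F1[OF u2 v2] UV k in \<open>simp_all add: U_def V_def\<close>)
  have eq2: "BCH smul F u1 v1 - BCH smul F u2 v2 = (L U - L V - (U - V)) + (U - V - ((u1 - u2) + (v1 - v2)))"
    by (simp add: BCH_eq U_def V_def algebra_simps)
  have "BCH smul F u1 v1 - BCH smul F u2 v2 \<in> F (Suc k)" unfolding eq2 by (rule F_add[OF h2 h1])
  then have "- smul (inverse \<theta>) (BCH smul F u1 v1 - BCH smul F u2 v2) \<in> F (Suc k)"
    by (intro F_minus F_smul)
  moreover have "T a x - T a y = - smul (inverse \<theta>) (BCH smul F u1 v1 - BCH smul F u2 v2)"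
    by (simp add: T_def u1_def v1_def u2_def v2_def Q_def smul_diff_right)
  ultimately show ?thesis by simp
qed

context
  fixes a assumes a: "a \<in> F 1"
begin

abbreviation it where "it k \<equiv> chi_iter smul P \<theta> F a k"

lemma it_Suc: "it (Suc k) = T a (it k)"
  by (simp add: T_def)

declare chi_iter.simps(2)[simp del]

lemma it_F1: "it k \<in> F 1"
proof (induction k)
  case 0 show ?case using a by simp
next
  case (Suc k) show ?case unfolding it_Suc by (rule T_F1[OF a Suc.IH])
qed

lemma it_step: "it (Suc k) - it k \<in> F (Suc k)"
proof (induction k)
  case 0
  have "T a a - a \<in> F 1" by (rule F_diff[OF T_F1[OF a a] a])
  then show ?case by (simp only: it_Suc chi_iter.simps(1) One_nat_def)
next
  case (Suc k)
  have "T a (it (Suc k)) - T a (it k) \<in> F (Suc (Suc k))" by (rule T_contr[OF it_F1 it_F1 Suc.IH]) simp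
  then show ?case by (simp only: it_Suc)
qed

lemma chi_props: "chi smul P \<theta> F a \<in> F 1 \<and> T a (chi smul P \<theta> F a) = chi smul P \<theta> F a"
proof -
  have "it (Suc n) - it n \<in> F n" for n using it_step F_Suc by blast
  then obtain c where c: "\<forall>n. c - it n \<in> F n" using F_complete[of it] by blast
  have "flim F it c" unfolding flim_def
  proof
    fix n show "\<exists>N. \<forall>m\<ge>N. it m - c \<in> F n"
      using c F_monoD F_diff_sym by blast
  qed
  then have chi: "chi smul P \<theta> F a = c" by (simp add: chi_def flimitI)
  have cF: "c \<in> F 1"
  proof -
    have "c = (c - it 1) + it 1" by simp
    then show ?thesis using c it_F1 F_add by metis
  qed
  have "T a c - c \<in> F n" for n
  proof (cases n)
    case 0 then show ?thesis by (simp add: F0)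
  next
    case (Suc m)
    show ?thesis
    proof (cases m)
      case 0
      then show ?thesis using Suc T_F1[OF a cF] cF F_diff by simp
    next
      case (Suc m')
      have "T a c - T a (it m) \<in> F (Suc m)"
        by (rule T_contr[OF cF it_F1]) (use c Suc in auto)
      moreover have "it (Suc m) - c \<in> F (Suc m)" using c F_diff_sym by blast
      moreover have "T a c - c = (T a c - T a (it m)) + (it (Suc m) - c)" by (simp add: it_Suc)
      ultimately show ?thesis using \<open>n = Suc m\<close> F_add by metis
    qed
  qed
  then have "T a c = c" using F_sep[of "T a c - c"] by simp
  then show ?thesis using chi cF by simp
qed

end

end




context cfrb
begin

lemma Q_rb: "Q x * Q y = Q (x * Q y + Q x * y - smul \<theta> (x * y))"
proof -
  have rb': "P x * P y = P (x * P y) + P (P x * y) - smul \<theta> (P (x * y))"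
    using P_rb[of x y] by (simp add: algebra_simps)
  show ?thesis
    unfolding Q_def' using rb'
    by (simp add: algebra_simps smul_mult_left smul_mult_right smul_smul smul_diff_right
        smul_add_right P_diff P_add P_smul)
qed

lemma sign_central: "((-1::'a) ^ m) * x = x * (-1) ^ m"
  by (cases "even m") simp_all

lemma sign_sq: "((-1::'a) ^ m) * ((-1) ^ m * x) = x"
  by (cases "even m") simp_all

lemma P_sign: "P ((-1) ^ m * x) = (-1) ^ m * P x"
  by (cases "even m") (simp_all add: P_minus)

lemma Q_sign: "Q ((-1) ^ m * x) = (-1) ^ m * Q x"
  by (cases "even m") (simp_all add: Q_minus)

lemma PQ_comm: "P (Q x) = Q (P x)"
  by (simp add: Q_def' P_diff P_smul)

lemma pow_alpha: "\<exists>\<alpha>. P \<alpha> = P c ^ Suc m \<and> Q \<alpha> = (-1) ^ m * Q c ^ Suc m"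
proof (induction m)
  case 0 show ?case by (rule exI[of _ c]) simp
next
  case (Suc m)
  then obtain \<alpha> where h: "P \<alpha> = P c ^ Suc m" "Q \<alpha> = (-1) ^ m * Q c ^ Suc m" by blast
  define w where "w = P c ^ Suc m"
  define \<beta> where "\<beta> = c * w + P c * \<alpha> - smul \<theta> (c * \<alpha>)"
  have "P c * P \<alpha> = P (c * P \<alpha> + P c * \<alpha> - smul \<theta> (c * \<alpha>))"
    using P_rb[of c \<alpha>] by (simp add: P_add P_diff P_smul algebra_simps)
  then have "P \<beta> = P c * w" by (simp add: \<beta>_def h(1) w_def)
  then have b1: "P \<beta> = P c ^ Suc (Suc m)" by (simp add: w_def)
  have Qa: "Q \<alpha> = smul \<theta> \<alpha> - w" by (simp add: Q_def' h(1) w_def)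
  have "c * Q \<alpha> + Q c * \<alpha> - smul \<theta> (c * \<alpha>) = - \<beta>"
    unfolding Qa \<beta>_def Q_def'[of c]
    by (simp add: algebra_simps smul_mult_left smul_mult_right)
  then have "Q c * Q \<alpha> = - Q \<beta>" using Q_rb[of c \<alpha>] by (simp add: Q_minus)
  then have "Q \<beta> = - (Q c * ((-1) ^ m * Q c ^ Suc m))" using h(2) by simp
  also have "\<dots> = (-1) ^ Suc m * Q c ^ Suc (Suc m)"
    by (simp add: mult.assoc[symmetric] sign_central[symmetric])
  finally show ?case using b1 by blast
qed

lemma pow_ident:
  "P (Q c ^ Suc m) + Q ((- P c) ^ Suc m) = 0 \<and> Q (P c ^ Suc m) + P ((- Q c) ^ Suc m) = 0"
proof -
  obtain \<alpha> where h: "P \<alpha> = P c ^ Suc m" "Q \<alpha> = (-1) ^ m * Q c ^ Suc m" using pow_alpha by blast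
  have v: "Q c ^ Suc m = (-1) ^ m * Q \<alpha>" using h(2) sign_sq by metis
  have pm: "(- x) ^ Suc m = - ((-1) ^ m * x ^ Suc m)" for x :: 'a
    using power_minus[of x "Suc m"] by simp
  have a1: "P (Q c ^ Suc m) = (-1) ^ m * P (Q \<alpha>)" unfolding v by (rule P_sign)
  have a2: "Q ((- P c) ^ Suc m) = - ((-1) ^ m * Q (P \<alpha>))"
    unfolding pm h(1)[symmetric] by (simp only: Q_minus Q_sign)
  have a3: "Q (P c ^ Suc m) = Q (P \<alpha>)" unfolding h(1)[symmetric] ..
  have a4: "P ((- Q c) ^ Suc m) = - ((-1) ^ m * ((-1) ^ m * P (Q \<alpha>)))"
    unfolding pm v by (simp only: P_minus P_sign)
  show ?thesis unfolding a1 a2 a3 a4 PQ_comm sign_sq by simp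
qed

lemma E_fs: "x \<in> F 1 \<Longrightarrow> fs (\<lambda>n. smul (fps_exp 1 $ n) (x ^ n)) (E x)"
  using ev_fs[of x "fps_exp 1"] by (simp add: E_ev)

lemma fs_const: "fs (\<lambda>n. if n = 0 then z else 0) z"
  unfolding fs_def
proof
  fix N show "z - (\<Sum>n<N. if n = 0 then z else 0) \<in> F N"
    by (cases N) (simp_all add: F0 sum.If_cases lessThan_Suc_eq_insert_0 image_Suc_lessThan[symmetric] del: lessThan_Suc)
qed

lemma exp_ident:
  assumes c: "c \<in> F 1"
  shows "P (E (Q c)) + Q (E (- P c)) = smul \<theta> 1" and "Q (E (P c)) + P (E (- Q c)) = smul \<theta> 1"
proof -
  have u: "P c \<in> F 1" and v: "Q c \<in> F 1" using c F_P F_Q by auto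
  have u': "- P c \<in> F 1" and v': "- Q c \<in> F 1" using u v F_minus by auto
  have Q1: "P 1 + Q 1 = smul \<theta> 1" by (simp add: Q_def')
  have "fs (\<lambda>n. P (smul (fps_exp 1 $ n) (Q c ^ n)) + Q (smul (fps_exp 1 $ n) ((- P c) ^ n)))
           (P (E (Q c)) + Q (E (- P c)))"
    by (rule fs_add[OF fs_P[OF E_fs[OF v]] fs_Q[OF E_fs[OF u']]])
  moreover have "(\<lambda>n. P (smul (fps_exp 1 $ n) (Q c ^ n)) + Q (smul (fps_exp 1 $ n) ((- P c) ^ n)))
      = (\<lambda>n. if n = 0 then smul \<theta> 1 else 0)"
  proof
    fix n show "P (smul (fps_exp 1 $ n) (Q c ^ n)) + Q (smul (fps_exp 1 $ n) ((- P c) ^ n))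
      = (if n = 0 then smul \<theta> 1 else 0)"
    proof (cases n)
      case 0 then show ?thesis using Q1 by simp
    next
      case (Suc m)
      then show ?thesis using pow_ident[of c m]
        by (simp only: P_smul Q_smul smul_add_right[symmetric]) simp
    qed
  qed
  ultimately show "P (E (Q c)) + Q (E (- P c)) = smul \<theta> 1" using fs_const fs_unique by metis
  have "fs (\<lambda>n. Q (smul (fps_exp 1 $ n) (P c ^ n)) + P (smul (fps_exp 1 $ n) ((- Q c) ^ n)))
           (Q (E (P c)) + P (E (- Q c)))"
    by (rule fs_add[OF fs_Q[OF E_fs[OF u]] fs_P[OF E_fs[OF v']]])
  moreover have "(\<lambda>n. Q (smul (fps_exp 1 $ n) (P c ^ n)) + P (smul (fps_exp 1 $ n) ((- Q c) ^ n)))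
      = (\<lambda>n. if n = 0 then smul \<theta> 1 else 0)"
  proof
    fix n show "Q (smul (fps_exp 1 $ n) (P c ^ n)) + P (smul (fps_exp 1 $ n) ((- Q c) ^ n))
      = (if n = 0 then smul \<theta> 1 else 0)"
    proof (cases n)
      case 0 then show ?thesis using Q1 by (simp add: add.commute)
    next
      case (Suc m)
      then show ?thesis using pow_ident[of c m]
        by (simp only: P_smul Q_smul smul_add_right[symmetric]) simp
    qed
  qed
  ultimately show "Q (E (P c)) + P (E (- Q c)) = smul \<theta> 1" using fs_const fs_unique by metis
qed

end



context cfrb
begin

lemma rinv_eq: "x * e = 1 \<Longrightarrow> e * x = 1 \<Longrightarrow> rinv e = x"
  unfolding rinv_def
proof (rule the_equality)
  fix y assume x: "x * e = 1" "e * x = 1" and y: "y * e = 1 \<and> e * y = 1"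
  have "y = y * (e * x)" using x by simp
  also have "\<dots> = (y * e) * x" by (simp add: mult.assoc)
  finally show "y = x" using y by simp
qed auto

lemma main:
  assumes th: "\<theta> \<noteq> 0" and a: "a \<in> F 1"
  shows "chi smul P \<theta> F a \<in> F 1
   \<and> chi smul P \<theta> F a = a - smul (inverse \<theta>)
        (BCH smul F (P (chi smul P \<theta> F a)) (Ptilde smul P \<theta> (chi smul P \<theta> F a)))
   \<and> chi smul P \<theta> F a = a + smul (inverse \<theta>)
        (BCH smul F (- P (chi smul P \<theta> F a)) (smul \<theta> a))
   \<and> fexp smul F (smul \<theta> a) =
        fexp smul F (P (chi smul P \<theta> F a)) * fexp smul F (Ptilde smul P \<theta> (chi smul P \<theta> F a))
   \<and> (\<forall>b. 1 + smul \<theta> b = fexp smul F (smul \<theta> a) \<longrightarrow>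
        (let x = rinv (fexp smul F (P (chi smul P \<theta> F a)));
             x' = rinv (fexp smul F (Ptilde smul P \<theta> (chi smul P \<theta> F a)))
         in x = 1 - P (x * b) \<and> (\<forall>y. y = 1 - P (y * b) \<longrightarrow> y = x)
          \<and> x' = 1 - Ptilde smul P \<theta> (b * x') \<and> (\<forall>y. y = 1 - Ptilde smul P \<theta> (b * y) \<longrightarrow> y = x')))"
proof -
  define c where "c = chi smul P \<theta> F a"
  have cF: "c \<in> F 1" and fixp: "T a c = c" using chi_props[OF a] by (auto simp: c_def)
  define u where "u = P c"
  define v where "v = Q c"
  have u: "u \<in> F 1" and v: "v \<in> F 1" using cF F_P F_Q by (auto simp: u_def v_def)
  have u': "- u \<in> F 1" and v': "- v \<in> F 1" using u v F_minus by auto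
  have uv: "u + v = smul \<theta> c" by (simp add: u_def v_def Q_def')
  have ta: "smul \<theta> a \<in> F 1" using a F_smul by auto
  define U where "U = E u * E v"
  have U1: "U - 1 \<in> F 1" using EE_F1[OF u v] by (simp add: U_def)
  have c2: "c = a - smul (inverse \<theta>) (BCH smul F u v)"
    using fixp by (simp add: T_def u_def v_def Q_def)
  have "smul (inverse \<theta>) (L U - u - v) = a - c"
    using c2 by (simp add: BCH_eq U_def algebra_simps)
  then have "L U - u - v = smul \<theta> a - smul \<theta> c"
    using smul_cancel2[OF th, of "L U - u - v"] by (simp add: smul_diff_right)
  then have LU: "L U = smul \<theta> a" using uv by (simp add: algebra_simps)
  have fac: "E (smul \<theta> a) = E u * E v" using EL[OF U1] LU by (simp add: U_def)
  have c3: "c = a + smul (inverse \<theta>) (BCH smul F (- u) (smul \<theta> a))"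
  proof -
    have "E (- u) * E (smul \<theta> a) = E v"
      unfolding fac by (simp add: mult.assoc[symmetric] E_inv'[OF u])
    then have "BCH smul F (- u) (smul \<theta> a) = v + u - smul \<theta> a"
      by (simp add: BCH_eq LE[OF v])
    also have "\<dots> = smul \<theta> (c - a)" using uv by (simp add: smul_diff_right algebra_simps)
    finally show ?thesis by (simp add: smul_inv_cancel[OF th])
  qed
  have part3: "1 + smul \<theta> b = E (smul \<theta> a) \<Longrightarrow>
        (let x = rinv (E u); x' = rinv (E v)
         in x = 1 - P (x * b) \<and> (\<forall>y. y = 1 - P (y * b) \<longrightarrow> y = x)
          \<and> x' = 1 - Q (b * x') \<and> (\<forall>y. y = 1 - Q (b * y) \<longrightarrow> y = x'))" for b
  proof -
    assume hb: "1 + smul \<theta> b = E (smul \<theta> a)"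
    have tb: "smul \<theta> b = U - 1" using hb fac by (simp add: U_def algebra_simps)
    have bF: "b \<in> F 1"
    proof -
      have "b = smul (inverse \<theta>) (smul \<theta> b)" by (simp add: smul_inv_cancel[OF th])
      then show ?thesis using tb U1 F_smul by metis
    qed
    define x where "x = E (- u)"
    define x' where "x' = E (- v)"
    have rx: "rinv (E u) = x" unfolding x_def by (rule rinv_eq[OF E_inv'[OF u] E_inv[OF u]])
    have rx': "rinv (E v) = x'" unfolding x'_def by (rule rinv_eq[OF E_inv'[OF v] E_inv[OF v]])
    have id1: "P (E v) + Q x = smul \<theta> 1" using exp_ident(1)[OF cF] by (simp add: x_def u_def v_def)
    have id2: "Q (E u) + P x' = smul \<theta> 1" using exp_ident(2)[OF cF] by (simp add: x'_def u_def v_def)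
    have s1: "x = 1 - P (x * b)"
    proof -
      have "smul \<theta> (x * b) = E v - x"
        by (simp add: smul_mult_right[symmetric] tb U_def algebra_simps x_def mult.assoc[symmetric] E_inv'[OF u])
      then have "smul \<theta> (P (x * b)) = P (E v) - P x" by (metis P_smul P_diff)
      also have "\<dots> = smul \<theta> 1 - smul \<theta> x" using id1 by (simp add: Q_def' algebra_simps)
      finally have "smul \<theta> (P (x * b)) = smul \<theta> (1 - x)" by (simp add: smul_diff_right)
      then have "P (x * b) = 1 - x" by (metis smul_inv_cancel[OF th])
      then show ?thesis by simp
    qed
    have s2: "x' = 1 - Q (b * x')"
    proof -
      have "smul \<theta> (b * x') = E u - x'"
        by (simp add: smul_mult_left[symmetric] tb U_def algebra_simps x'_def mult.assoc E_inv[OF v])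
      then have "smul \<theta> (Q (b * x')) = Q (E u) - Q x'" by (metis Q_smul Q_diff)
      also have "\<dots> = smul \<theta> 1 - smul \<theta> x'" using id2 by (simp add: Q_def' algebra_simps)
      finally have "smul \<theta> (Q (b * x')) = smul \<theta> (1 - x')" by (simp add: smul_diff_right)
      then have "Q (b * x') = 1 - x'" by (metis smul_inv_cancel[OF th])
      then show ?thesis by simp
    qed
    have u1: "y = x" if y: "y = 1 - P (y * b)" for y
    proof -
      have "y - x \<in> F n" for n
      proof (induction n)
        case 0 then show ?case by (simp add: F0)
      next
        case (Suc n)
        have "y - x = P ((x - y) * b)" using y s1 by (metis P_diff diff_diff_eq2 diff_add_cancel left_diff_distrib add_diff_cancel_left' minus_diff_eq)
        moreover have "(x - y) * b \<in> F (n + 1)" using F_mult[OF F_diff_sym[OF Suc.IH] bF] .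
        ultimately show ?case using F_P by simp
      qed
      then show ?thesis using F_sep[of "y - x"] by simp
    qed
    have u2: "y = x'" if y: "y = 1 - Q (b * y)" for y
    proof -
      have "y - x' \<in> F n" for n
      proof (induction n)
        case 0 then show ?case by (simp add: F0)
      next
        case (Suc n)
        have "y - x' = Q (b * (x' - y))" using y s2 by (metis Q_diff diff_diff_eq2 diff_add_cancel right_diff_distrib add_diff_cancel_left' minus_diff_eq)
        moreover have "b * (x' - y) \<in> F (1 + n)" using F_mult[OF bF F_diff_sym[OF Suc.IH]] .
        ultimately show ?case using F_Q by simp
      qed
      then show ?thesis using F_sep[of "y - x'"] by simp
    qed
    show ?thesis unfolding rx rx' Let_def using s1 s2 u1 u2 by blast
  qed
  show ?thesis
    unfolding c_def[symmetric] Q_def[symmetric] u_def[symmetric] v_def[symmetric]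
    using cF c2 c3 fac part3 by blast
qed

end


theorem proposition2p12:
  fixes smul :: "'k::field_char_0 \<Rightarrow> 'a::ring_1 \<Rightarrow> 'a"
    and P :: "'a \<Rightarrow> 'a" and \<theta> :: 'k and F :: "nat \<Rightarrow> 'a set" and a :: 'a
  assumes "\<theta> \<noteq> 0"
    and "complete_filtered_rb smul P \<theta> F"
    and "a \<in> F 1"
  shows "chi smul P \<theta> F a \<in> F 1
   \<and> chi smul P \<theta> F a = a - smul (inverse \<theta>)
        (BCH smul F (P (chi smul P \<theta> F a)) (Ptilde smul P \<theta> (chi smul P \<theta> F a)))
   \<and> chi smul P \<theta> F a = a + smul (inverse \<theta>)
        (BCH smul F (- P (chi smul P \<theta> F a)) (smul \<theta> a))
   \<and> fexp smul F (smul \<theta> a) =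
        fexp smul F (P (chi smul P \<theta> F a)) * fexp smul F (Ptilde smul P \<theta> (chi smul P \<theta> F a))
   \<and> (\<forall>b. 1 + smul \<theta> b = fexp smul F (smul \<theta> a) \<longrightarrow>
        (let x = rinv (fexp smul F (P (chi smul P \<theta> F a)));
             x' = rinv (fexp smul F (Ptilde smul P \<theta> (chi smul P \<theta> F a)))
         in x = 1 - P (x * b) \<and> (\<forall>y. y = 1 - P (y * b) \<longrightarrow> y = x)
          \<and> x' = 1 - Ptilde smul P \<theta> (b * x') \<and> (\<forall>y. y = 1 - Ptilde smul P \<theta> (b * y) \<longrightarrow> y = x')))"
proof -
  interpret cfrb smul P \<theta> F by (rule cfrb.intro) (rule assms(2))
  show ?thesis by (rule main[OF assms(1) assms(3)])
qed

end
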